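(* Let $q\ge1$ and $x_0,\ldots,x_q\in\mathbb{R}$ with $x_q\ne x_0$. Assume that $|x_0-x_j|\le D$ for all $j=1,\ldots,q$ and $|x_0-x_j|\ge\Delta$ for all $j=1,\ldots,q-1$, where $D\ge\Delta>0$. Then for every $\tau\in(0,1]$, $$I_\tau(x_0,\ldots,x_q)\le\frac{2}{\tau^2}\left(\frac{D}{\Delta}\right)^{9/8+2\lambda^{-1}\log(1/\tau)},$$ where $\lambda$ is the positive root of the equation $e^{e^\lambda}(e^\lambda-1)=1$.
   Context: For real numbers $x_0,\ldots,x_q$ with $x_j\ne x_0$ for $j=1,\ldots,q$, and $\tau\in(0,1]$, define $$I_\tau(x_0,\ldots,x_q)=\min_{0=n_0<n_1<\cdots<n_m=q}\ \tau^{-m}\,\frac{\prod_{l=0}^{m-1}\prod_{j:\,n_l\le j<n_{l+1}}|x_{n_{l+1}}-x_j|}{\prod_{j=1}^q|x_0-x_j|},$$ the minimum being taken over all $m\ge1$ and all strictly increasing integer sequences $0=n_0<n_1<\cdots<n_m=q$. *)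

theory Defs
  imports Complex_Main
begin

text \<open>A chain \<open>0 = n_0 < n_1 < ... < n_m = q\<close> with \<open>m \<ge> 1\<close> is represented as the
  list \<open>[n_0, ..., n_m]\<close>; then \<open>m = length ns - 1\<close>.\<close>
definition admissible_chain :: "nat \<Rightarrow> nat list \<Rightarrow> bool" where
  "admissible_chain q ns \<longleftrightarrow> length ns \<ge> 2 \<and> sorted_wrt (<) ns \<and> hd ns = 0 \<and> last ns = q"

definition chain_value :: "real \<Rightarrow> (nat \<Rightarrow> real) \<Rightarrow> nat \<Rightarrow> nat list \<Rightarrow> real" where
  "chain_value \<tau> x q ns =
     (let m = length ns - 1 in
      (1 / \<tau>) ^ m *
      (\<Prod>l<m. \<Prod>j\<in>{ns ! l ..< ns ! (l + 1)}. \<bar>x (ns ! (l + 1)) - x j\<bar>) /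
      (\<Prod>j\<in>{1..q}. \<bar>x 0 - x j\<bar>))"

definition I_tau :: "real \<Rightarrow> (nat \<Rightarrow> real) \<Rightarrow> nat \<Rightarrow> real" where
  "I_tau \<tau> x q = Min (chain_value \<tau> x q ` {ns. admissible_chain q ns})"

definition lambda_root :: real where
  "lambda_root = (THE l. l > 0 \<and> exp (exp l) * (exp l - 1) = 1)"

end

theory Submission
  imports Defs
begin


fun cvl :: "real \<Rightarrow> (nat \<Rightarrow> real) \<Rightarrow> nat list \<Rightarrow> real" where
  "cvl \<tau> x [] = 1"
| "cvl \<tau> x [t] = 1"
| "cvl \<tau> x (s # t # rest) = (1/\<tau>) * (\<Prod>j\<in>{s..<t}. \<bar>x t - x j\<bar>) * cvl \<tau> x (t # rest)"

lemma cvl_eq: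
  "ns \<noteq> [] \<Longrightarrow> cvl \<tau> x ns = (1/\<tau>)^(length ns - 1) *
     (\<Prod>l<length ns - 1. \<Prod>j\<in>{ns ! l ..< ns ! (l + 1)}. \<bar>x (ns ! (l + 1)) - x j\<bar>)"
proof (induction \<tau> x ns rule: cvl.induct)
  case (3 \<tau> x s t rest)
  have "length (s # t # rest) - 1 = Suc (length (t # rest) - 1)" by simp
  then show ?case using 3 by (simp only: prod.lessThan_Suc_shift) simp
qed auto

lemma cvl_nonneg: "0 < \<tau> \<Longrightarrow> 0 \<le> cvl \<tau> x ns"
  by (induction \<tau> x ns rule: cvl.induct) (auto intro!: mult_nonneg_nonneg prod_nonneg divide_nonneg_pos)

lemma chain_value_cvl:
  assumes "admissible_chain q ns"
  shows "chain_value \<tau> x q ns = cvl \<tau> x ns / (\<Prod>j\<in>{1..q}. \<bar>x 0 - x j\<bar>)"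
proof -
  have "ns \<noteq> []" using assms unfolding admissible_chain_def by auto
  then show ?thesis unfolding chain_value_def Let_def by (simp add: cvl_eq)
qed

lemma sorted_le_last: "sorted_wrt (<) (ns::nat list) \<Longrightarrow> z \<in> set ns \<Longrightarrow> z \<le> last ns"
proof (induction ns)
  case Nil then show ?case by simp
next
  case (Cons a rest)
  show ?case
  proof (cases "rest = []")
    case True then show ?thesis using Cons by simp
  next
    case False
    then have "last rest \<in> set rest" by simp
    then have "a < last rest" using Cons.prems(1) by simp
    then show ?thesis using Cons False by (auto simp: less_imp_le)
  qed
qed

lemma sorted_hd_le: "sorted_wrt (<) (ns::nat list) \<Longrightarrow> z \<in> set ns \<Longrightarrow> hd ns \<le> z"
  by (cases ns) auto

lemma finite_admissible: "finite {ns. admissible_chain q ns}"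
proof (rule finite_subset)
  show "{ns. admissible_chain q ns} \<subseteq> {xs. set xs \<subseteq> {0..q} \<and> length xs \<le> Suc q}"
  proof
    fix ns assume "ns \<in> {ns. admissible_chain q ns}"
    then have a: "sorted_wrt (<) ns" "last ns = q" unfolding admissible_chain_def by auto
    have s: "set ns \<subseteq> {0..q}" using sorted_le_last[OF a(1)] a(2) by auto
    have "distinct ns" using a(1) by (simp add: strict_sorted_iff)
    then have "length ns = card (set ns)" by (simp add: distinct_card)
    also have "\<dots> \<le> card {0..q}" by (rule card_mono[OF _ s]) simp
    finally show "ns \<in> {xs. set xs \<subseteq> {0..q} \<and> length xs \<le> Suc q}" using s by simp
  qed
  show "finite {xs. set xs \<subseteq> {0..q} \<and> length xs \<le> Suc q}"
    by (rule finite_lists_length_le) simp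
qed

lemma I_tau_le: "admissible_chain q ns \<Longrightarrow> I_tau \<tau> x q \<le> chain_value \<tau> x q ns"
  unfolding I_tau_def by (rule Min_le) (auto intro: finite_admissible)

lemma same_sign_dist: "0 < (u::real) * v \<Longrightarrow> \<bar>u - v\<bar> = \<bar>\<bar>u\<bar> - \<bar>v\<bar>\<bar>"
  by (cases "0 \<le> u"; cases "0 \<le> v") (auto simp: zero_less_mult_iff)

lemma opp_sign_dist: "(u::real) * v < 0 \<Longrightarrow> \<bar>u - v\<bar> = \<bar>u\<bar> + \<bar>v\<bar>"
  by (cases "0 \<le> u"; cases "0 \<le> v") (auto simp: mult_less_0_iff)




lemma lambda_root_props: "0 < lambda_root \<and> exp (exp lambda_root) * (exp lambda_root - 1) = 1"
proof -
  define f where "f = (\<lambda>l::real. exp (exp l) * (exp l - 1))"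
  have cont: "continuous_on {0..1} f" unfolding f_def by (intro continuous_intros)
  have f0: "f 0 = 0" unfolding f_def by simp
  have f1: "1 \<le> f 1"
  proof -
    have e2: "2 \<le> exp (1::real)" using exp_ge_add_one_self[of 1] by simp
    have "1 \<le> exp (exp (1::real))" by simp
    moreover have "1 \<le> exp (1::real) - 1" using e2 by simp
    ultimately have "1 * 1 \<le> exp (exp (1::real)) * (exp 1 - 1)" by (intro mult_mono) auto
    then show ?thesis unfolding f_def by simp
  qed
  obtain l where l: "0 \<le> l" "l \<le> 1" "f l = 1" using IVT'[of f 0 1 1] f0 f1 cont by auto
  have lpos: "0 < l" using l f0 by (cases "l = 0") auto
  have mono: "f u < f v" if "0 < u" "u < v" for u v
  proof -
    have "exp (exp u) < exp (exp v)" using that by simp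
    moreover have "0 < exp u - 1" using that by simp
    moreover have "exp u - 1 < exp v - 1" using that by simp
    ultimately show ?thesis unfolding f_def by (intro mult_strict_mono) auto
  qed
  have "lambda_root = l"
    unfolding lambda_root_def
  proof (rule the_equality)
    show "0 < l \<and> exp (exp l) * (exp l - 1) = 1" using lpos l(3) unfolding f_def by simp
  next
    fix l' :: real assume h: "0 < l' \<and> exp (exp l') * (exp l' - 1) = 1"
    then have fl': "f l' = 1" unfolding f_def by simp
    show "l' = l"
    proof (rule ccontr)
      assume "l' \<noteq> l"
      then have "l' < l \<or> l < l'" by auto
      then show False using mono[of l' l] mono[of l l'] h lpos fl' l(3) by auto
    qed
  qed
  then show ?thesis using lpos l(3) unfolding f_def by simp
qed

definition bb :: real where "bb = exp lambda_root"

lemma bb_props: "1 < bb" "(bb - 1) * exp bb = 1"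
  using lambda_root_props unfolding bb_def by (auto simp: mult.commute)

lemma bb_gt: "6/5 < bb"
proof (rule ccontr)
  assume "\<not> 6/5 < bb"
  then have h: "bb \<le> 6/5" by simp
  have e15: "exp (1/5::real) \<le> 5/4"
  proof -
    have "1 + (-1/5) \<le> exp (-1/5::real)" by (rule exp_ge_add_one_self)
    then have h45: "4/5 \<le> exp (-1/5::real)" by simp
    have "exp (1/5::real) * exp (-1/5) = 1" by (simp add: exp_add[symmetric])
    moreover have "exp (1/5::real) * (4/5) \<le> exp (1/5::real) * exp (-1/5)"
      by (rule mult_left_mono[OF h45]) simp
    ultimately show ?thesis by simp
  qed
  have "exp (6/5::real) = exp (1/5) ^ 6" by (subst exp_of_nat_mult[symmetric]) simp
  also have "\<dots> \<le> (5/4)^6" by (rule power_mono[OF e15]) simp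
  finally have e65a: "exp (6/5::real) \<le> (5/4)^6" .
  have "(5/4::real)^6 < 5" by (simp add: power_divide)
  with e65a have e65: "exp (6/5::real) < 5" by linarith
  have "(bb - 1) * exp bb \<le> (1/5) * exp (6/5)"
    using h bb_props(1) by (intro mult_mono) auto
  also have "\<dots> < 1" using e65 by simp
  finally show False using bb_props(2) by simp
qed

lemma absorb_ineq:
  fixes r :: real assumes "0 \<le> r" "r \<le> bb" shows "\<bar>1 - r\<bar> \<le> exp (- r)"
proof (cases "r \<le> 1")
  case True
  then show ?thesis using exp_ge_add_one_self[of "-r"] by simp
next
  case False
  then have r1: "1 < r" by simp
  have "(r - 1) * exp r \<le> (bb - 1) * exp bb" using r1 assms by (intro mult_mono) auto
  then have "(r - 1) * exp r \<le> 1" using bb_props(2) by simp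
  then have "r - 1 \<le> exp (-r)" by (simp add: exp_minus field_simps)
  then show ?thesis using r1 by simp
qed

lemma entropy_ln2:
  fixes A M :: real assumes "0 < A" "0 < M"
  shows "M * ln ((A+M)/M) + A * ln ((A+M)/A) \<le> (A+M) * ln 2"
proof -
  have h1: "ln ((A+M)/M) = ln ((A+M)/(2*M)) + ln 2" using assms by (simp add: ln_div ln_mult)
  have h2: "ln ((A+M)/A) = ln ((A+M)/(2*A)) + ln 2" using assms by (simp add: ln_div ln_mult)
  have i1: "ln ((A+M)/(2*M)) \<le> (A+M)/(2*M) - 1" by (rule ln_le_minus_one) (use assms in simp)
  have i2: "ln ((A+M)/(2*A)) \<le> (A+M)/(2*A) - 1" by (rule ln_le_minus_one) (use assms in simp)
  have "M * ln ((A+M)/M) \<le> M * ((A+M)/(2*M) - 1 + ln 2)" unfolding h1 using i1 assms by (intro mult_left_mono) auto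
  moreover have "A * ln ((A+M)/A) \<le> A * ((A+M)/(2*A) - 1 + ln 2)" unfolding h2 using i2 assms by (intro mult_left_mono) auto
  moreover have "M * ((A+M)/(2*M) - 1 + ln 2) + A * ((A+M)/(2*A) - 1 + ln 2) = (A+M) * ln 2"
    using assms by (simp add: field_simps)
  ultimately show ?thesis by linarith
qed




lemma poly_nonneg:
  fixes a b :: real assumes a: "0 \<le> a" and b: "0 \<le> b"
  shows "0 \<le> 9*((6/5+a)-1)*(2*(6/5+a)-1)*((6/5+a)+b)*(6*b+4)*(1+b)*(6+4*b)
    + 16*b*(6*b+4)*(1+b)*(6+4*b)*((6/5+a)+1)
    - 8*(2*(6/5+a)-1)*((6/5+a)-1)*(6*b+1)*(6+4*b)*((6/5+a)+1)
    - 8*b*(6+b)*(2*(6/5+a)-1)*((6/5+a)+b)*(6*b+4)*((6/5+a)+1)"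
proof -
  have eq: "9*((6/5+a)-1)*(2*(6/5+a)-1)*((6/5+a)+b)*(6*b+4)*(1+b)*(6+4*b)
    + 16*b*(6*b+4)*(1+b)*(6+4*b)*((6/5+a)+1)
    - 8*(2*(6/5+a)-1)*((6/5+a)-1)*(6*b+1)*(6+4*b)*((6/5+a)+1)
    - 8*b*(6+b)*(2*(6/5+a)-1)*((6/5+a)+b)*(6*b+4)*((6/5+a)+1)
    = 21068/25*(b - a/2)^2 + 220*b*(1 - 45/22*a*b)^2 + 60*a*(1 - 259/250*b^2)^2
      + 130*a*(1-317/325*a*b)^2
      + (5376/125 + 1044/125*b + 45184/125*b^2 + 222036/125*b^3 + 18936/25*b^4 + 3338/25*a + 15908/25*a*b^3 + 1343757/3125*a*b^4 + 9973/25*a^2 + 212/5*a^2*b^2 + 17663/55*a^2*b^3 + 336*a^2*b^4 + 336*a^3 + 344*a^3*b + 358022/1625*a^3*b^2 + 336*a^3*b^3)"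
    by algebra
  show ?thesis unfolding eq using a b
    by (intro add_nonneg_nonneg mult_nonneg_nonneg) auto
qed


lemma key_rat:
  fixes a b :: real assumes a: "0 \<le> a" and b: "0 < b"
  shows "-2*b/((2*(6/5+a)-1)*((6/5+a)+b)) + ((6/5+a)-1)*(6*b+1)/((6*b+4)*((6/5+a)+b)*(1+b))
     + b*(6+b)/((6+4*b)*(1+b)) \<le> 9/8*((6/5+a)-1)/((6/5+a)+1)"
proof -
  define r where "r = 6/5 + a"
  have r: "r \<ge> 6/5" using a r_def by simp
  have p1: "0 < 2*r-1" "0 < r+b" "0 < 6*b+4" "0 < 1+b" "0 < 6+4*b" "0 < r+1" using r b by auto
  have N: "0 \<le> 9*(r-1)*(2*r-1)*(r+b)*(6*b+4)*(1+b)*(6+4*b)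
    + 16*b*(6*b+4)*(1+b)*(6+4*b)*(r+1)
    - 8*(2*r-1)*(r-1)*(6*b+1)*(6+4*b)*(r+1)
    - 8*b*(6+b)*(2*r-1)*(r+b)*(6*b+4)*(r+1)"
    using poly_nonneg[OF a less_imp_le[OF b]] unfolding r_def .
  define Den where "Den = 8*(2*r-1)*(r+b)*(6*b+4)*(1+b)*(6+4*b)*(r+1)"
  have Dp: "0 < Den" unfolding Den_def using p1 by simp
  have cancel: "\<And>x y z::real. y \<noteq> 0 \<Longrightarrow> x / y * (y * z) = x * z" by simp
  have e1: "(-2*b/((2*r-1)*(r+b))) * Den = -16*b*(6*b+4)*(1+b)*(6+4*b)*(r+1)"
  proof -
    have "Den = ((2*r-1)*(r+b)) * (8*(6*b+4)*(1+b)*(6+4*b)*(r+1))" unfolding Den_def by algebra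
    then show ?thesis using cancel[of "(2*r-1)*(r+b)" "-2*b"] p1 by (simp; algebra)
  qed
  have e2: "((r-1)*(6*b+1)/((6*b+4)*(r+b)*(1+b))) * Den = 8*(2*r-1)*(r-1)*(6*b+1)*(6+4*b)*(r+1)"
  proof -
    have "Den = ((6*b+4)*(r+b)*(1+b)) * (8*(2*r-1)*(6+4*b)*(r+1))" unfolding Den_def by algebra
    then show ?thesis using cancel[of "(6*b+4)*(r+b)*(1+b)" "(r-1)*(6*b+1)"] p1 by (simp; algebra)
  qed
  have e3: "(b*(6+b)/((6+4*b)*(1+b))) * Den = 8*b*(6+b)*(2*r-1)*(r+b)*(6*b+4)*(r+1)"
  proof -
    have "Den = ((6+4*b)*(1+b)) * (8*(2*r-1)*(r+b)*(6*b+4)*(r+1))" unfolding Den_def by algebra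
    then show ?thesis using cancel[of "(6+4*b)*(1+b)" "b*(6+b)"] p1 by (simp; algebra)
  qed
  have e4: "(9/8*(r-1)/(r+1)) * Den = 9*(r-1)*(2*r-1)*(r+b)*(6*b+4)*(1+b)*(6+4*b)"
  proof -
    have D4: "Den = (r+1) * (8*(2*r-1)*(r+b)*(6*b+4)*(1+b)*(6+4*b))" unfolding Den_def by algebra
    have "9/8*(r-1)/(r+1) * Den = 9/8*(r-1) * (8*(2*r-1)*(r+b)*(6*b+4)*(1+b)*(6+4*b))"
      unfolding D4 by (rule cancel) (use p1 in simp)
    then show ?thesis by algebra
  qed
  have dist: "\<And>u v w z::real. (u+v+w)*z = u*z+v*z+w*z" by (simp add: algebra_simps)
  have "(-2*b/((2*r-1)*(r+b)) + (r-1)*(6*b+1)/((6*b+4)*(r+b)*(1+b))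
     + b*(6+b)/((6+4*b)*(1+b))) * Den \<le> (9/8*(r-1)/(r+1)) * Den"
    unfolding dist[of "-2*b/((2*r-1)*(r+b))"] e1 e2 e3 e4 using N by linarith
  then have "-2*b/((2*r-1)*(r+b)) + (r-1)*(6*b+1)/((6*b+4)*(r+b)*(1+b))
     + b*(6+b)/((6+4*b)*(1+b)) \<le> 9/8*(r-1)/(r+1)"
    by (rule mult_right_le_imp_le[OF _ Dp])
  then show ?thesis unfolding r_def .
qed

lemma ln_lower_pade:
  fixes y :: real assumes "1 \<le> y" shows "2*(y-1)/(y+1) \<le> ln y"
proof -
  let ?g = "\<lambda>t::real. ln t - 2*(t-1)/(t+1)"
  have "?g 1 \<le> ?g y"
  proof (rule DERIV_nonneg_imp_nondecreasing[OF assms])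
    fix t :: real assume t: "1 \<le> t" "t \<le> y"
    have "(?g has_real_derivative (1/t - 4/(t+1)^2)) (at t)"
      using t by (auto intro!: derivative_eq_intros simp: field_simps power2_eq_square)
    moreover have "0 \<le> 1/t - 4/(t+1)^2"
    proof -
      have tp: "0 < t" "0 < (t+1)^2" using t by auto
      have e: "(t+1)^2 - 4*t = (t-1)^2" by (simp add: power2_eq_square algebra_simps)
      have "4*t \<le> (t+1)^2" using e by (smt (verit) zero_le_power2)
      then have "4/(t+1)^2 \<le> 1/t" using tp by (simp add: field_simps)
      then show ?thesis by simp
    qed
    ultimately show "\<exists>d. (?g has_real_derivative d) (at t) \<and> 0 \<le> d" by blast
  qed
  then show ?thesis by simp
qed

lemma ln_upper_pade:
  fixes x :: real assumes "0 \<le> x" shows "ln (1+x) \<le> x*(6+x)/(6+4*x)"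
proof -
  let ?g = "\<lambda>t::real. t*(6+t)/(6+4*t) - ln (1+t)"
  have "?g 0 \<le> ?g x"
  proof (rule DERIV_nonneg_imp_nondecreasing[OF assms])
    fix t :: real assume t: "0 \<le> t" "t \<le> x"
    have "(?g has_real_derivative ((36+12*t+4*t^2)/(6+4*t)^2 - 1/(1+t))) (at t)"
      using t by (auto intro!: derivative_eq_intros simp: field_simps power2_eq_square)
    moreover have "0 \<le> (36+12*t+4*t^2)/(6+4*t)^2 - 1/(1+t)"
    proof -
      have tp: "0 < 1+t" "0 < (6+4*t)^2" using t by auto
      have e: "(36+12*t+4*t^2)*(1+t) - (6+4*t)^2 = 4*t^3" by (simp add: power2_eq_square power3_eq_cube algebra_simps)
      have "0 \<le> 4*t^3" using t by simp
      then have "(6+4*t)^2 \<le> (36+12*t+4*t^2)*(1+t)" using e by linarith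
      then have "1/(1+t) \<le> (36+12*t+4*t^2)/(6+4*t)^2" using tp by (simp add: field_simps)
      then show ?thesis by simp
    qed
    ultimately show "\<exists>d. (?g has_real_derivative d) (at t) \<and> 0 \<le> d" by blast
  qed
  then show ?thesis by simp
qed


lemma key_rb:
  fixes r b :: real assumes r: "6/5 \<le> r" and b: "0 < b"
  shows "b*ln(1-1/r)/(r+b) + b*(r-1)*ln(1+1/b)/((r+b)*(1+b)) + ln(1+b)/(1+b) \<le> 9/16*ln r"
proof -
  have rp: "0 < r" "0 < r - 1" "0 < 2*r-1" "0 < r+b" "0 < 1+b" using r b by auto
  have l1: "ln(1-1/r) \<le> -2/(2*r-1)"
  proof -
    have y: "1 \<le> r/(r-1)" using rp by simp
    have "2*(r/(r-1)-1)/(r/(r-1)+1) \<le> ln (r/(r-1))" by (rule ln_lower_pade[OF y])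
    moreover have "2*(r/(r-1)-1)/(r/(r-1)+1) = 2/(2*r-1)"
    proof -
      have e1: "r/(r-1)-1 = 1/(r-1)" using rp by (simp add: field_simps)
      have e2: "r/(r-1)+1 = (2*r-1)/(r-1)" using rp by (simp add: field_simps)
      show ?thesis unfolding e1 e2 using rp by (simp add: divide_simps)
    qed
    moreover have "ln(1-1/r) = - ln (r/(r-1))"
    proof -
      have "1-1/r = (r-1)/r" using rp by (simp add: field_simps)
      then show ?thesis using rp by (simp add: ln_div)
    qed
    ultimately show ?thesis by simp
  qed
  have l2: "ln(1+1/b) \<le> (6*b+1)/(b*(6*b+4))"
  proof -
    have "ln(1+1/b) \<le> (1/b)*(6+1/b)/(6+4*(1/b))" by (rule ln_upper_pade) (use b in simp)
    also have "\<dots> = (6*b+1)/(b*(6*b+4))"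
    proof -
      have bz: "b \<noteq> 0" "6*b+4 \<noteq> 0" using b by auto
      have e1: "6+4*(1/b) = (6*b+4)/b" using bz by (simp add: field_simps)
      have e2: "(1/b)*(6+1/b) = (6*b+1)/(b*b)" using bz by (simp add: field_simps)
      show ?thesis unfolding e1 e2 using bz by simp
    qed
    finally show ?thesis .
  qed
  have l3: "ln(1+b) \<le> b*(6+b)/(6+4*b)" by (rule ln_upper_pade) (use b in simp)
  have l4: "2*(r-1)/(r+1) \<le> ln r" by (rule ln_lower_pade) (use r in simp)
  have t1: "b*ln(1-1/r)/(r+b) \<le> -2*b/((2*r-1)*(r+b))"
  proof -
    have "b*ln(1-1/r)/(r+b) \<le> b*(-2/(2*r-1))/(r+b)"
      by (rule divide_right_mono[OF mult_left_mono[OF l1]]) (use rp b in auto)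
    also have "\<dots> = -2*b/((2*r-1)*(r+b))" by simp
    finally show ?thesis .
  qed
  have t2: "b*(r-1)*ln(1+1/b)/((r+b)*(1+b)) \<le> (r-1)*(6*b+1)/((6*b+4)*(r+b)*(1+b))"
  proof -
    have "b*(r-1)*ln(1+1/b)/((r+b)*(1+b)) \<le> b*(r-1)*((6*b+1)/(b*(6*b+4)))/((r+b)*(1+b))"
      by (rule divide_right_mono[OF mult_left_mono[OF l2]]) (use rp b in auto)
    also have "\<dots> = (r-1)*(6*b+1)/((6*b+4)*(r+b)*(1+b))"
    proof -
      have nz: "b \<noteq> 0" "6*b+4 \<noteq> 0" "r+b \<noteq> 0" "1+b \<noteq> 0" using b rp by auto
      show ?thesis using nz by (simp add: divide_simps; algebra)
    qed
    finally show ?thesis .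
  qed
  have t3: "ln(1+b)/(1+b) \<le> b*(6+b)/((6+4*b)*(1+b))"
  proof -
    have "ln(1+b)/(1+b) \<le> (b*(6+b)/(6+4*b))/(1+b)"
      by (rule divide_right_mono[OF l3]) (use rp in auto)
    also have "\<dots> = b*(6+b)/((6+4*b)*(1+b))" by simp
    finally show ?thesis .
  qed
  have kr: "-2*b/((2*r-1)*(r+b)) + (r-1)*(6*b+1)/((6*b+4)*(r+b)*(1+b))
     + b*(6+b)/((6+4*b)*(1+b)) \<le> 9/8*(r-1)/(r+1)"
    using key_rat[of "r - 6/5" b] r b by simp
  have "9/8*(r-1)/(r+1) = 9/16*(2*(r-1)/(r+1))" by (simp add: divide_simps; algebra)
  also have "\<dots> \<le> 9/16*ln r" by (rule mult_left_mono[OF l4]) simp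
  finally have "9/8*(r-1)/(r+1) \<le> 9/16*ln r" .
  then show ?thesis using t1 t2 t3 kr by linarith
qed


lemma E_bound:
  fixes A B P :: real assumes P: "0 < P" and B: "0 < B" and A: "6/5*P \<le> A"
  shows "(B*((P+B)/(A+B)*ln((A-P)/A) + (A-P)/(A+B)*ln((B+P)/B)) + P*ln((B+P)/P))/(P+B) \<le> 9/16*ln(A/P)"
proof -
  define r where "r = A/P"
  define b where "b = B/P"
  have r: "6/5 \<le> r" unfolding r_def using A P by (simp add: field_simps)
  have b: "0 < b" unfolding b_def using B P by simp
  have Ar: "A = r*P" unfolding r_def using P by simp
  have Bb: "B = b*P" unfolding b_def using P by simp
  have L1: "(A-P)/A = 1-1/r" unfolding Ar using P r by (simp add: divide_simps; algebra)
  have L2: "(B+P)/B = 1+1/b" unfolding Bb using P b by (simp add: divide_simps; algebra)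
  have L3: "(B+P)/P = 1+b" unfolding Bb using P b by (simp add: divide_simps; algebra)
  have nz: "P \<noteq> 0" "r+b \<noteq> 0" "1+b \<noteq> 0" "b \<noteq> 0" "r \<noteq> 0" using P r b by auto
  have "(B*((P+B)/(A+B)*ln((A-P)/A) + (A-P)/(A+B)*ln((B+P)/B)) + P*ln((B+P)/P))/(P+B)
      = b*ln(1-1/r)/(r+b) + b*(r-1)*ln(1+1/b)/((r+b)*(1+b)) + ln(1+b)/(1+b)"
    unfolding L1 L2 L3 unfolding Ar Bb using nz by (simp add: divide_simps; algebra)
  also have "\<dots> \<le> 9/16*ln r" by (rule key_rb[OF r b])
  finally show ?thesis unfolding r_def .
qed

lemma forced_switch:
  fixes A B P c l1 l2 :: real
  assumes P: "0 < P" and B: "0 < B" and A: "6/5*P \<le> A" and c: "0 \<le> c"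
  shows "(B*(l1 + c + ln((A-P)/A)) + P*(l2 + ln((B+P)/P)))/(P+B) \<le> (B*l1 + A*l2)/(A+B) + c + 9/16*ln(A/P)
       \<or> (B*(l2 + c + ln((B+P)/B)) + P*(l2 + ln((B+P)/P)))/(P+B) \<le> (B*l1 + A*l2)/(A+B) + c + 9/16*ln(A/P)"
proof (rule ccontr)
  define Q1 where "Q1 = (B*(l1 + c + ln((A-P)/A)) + P*(l2 + ln((B+P)/P)))/(P+B)"
  define Q2 where "Q2 = (B*(l2 + c + ln((B+P)/B)) + P*(l2 + ln((B+P)/P)))/(P+B)"
  define RHS where "RHS = (B*l1 + A*l2)/(A+B) + c + 9/16*ln(A/P)"
  define E where "E = (B*((P+B)/(A+B)*ln((A-P)/A) + (A-P)/(A+B)*ln((B+P)/B)) + P*ln((B+P)/P))/(P+B)"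
  define al where "al = (P+B)/(A+B)"
  assume "\<not> ?thesis"
  then have h: "RHS < Q1" "RHS < Q2" unfolding Q1_def Q2_def RHS_def by auto
  have Apos: "P < A" using A P by simp
  have al: "0 < al" "al \<le> 1" unfolding al_def using P B Apos by auto
  have comb: "al*Q1 + (1-al)*Q2 = (B*l1 + A*l2)/(A+B) + c*B/(P+B) + E"
  proof -
    have nz: "A+B \<noteq> 0" "P+B \<noteq> 0" using P B Apos by auto
    show ?thesis unfolding al_def Q1_def Q2_def E_def using nz by (simp add: divide_simps; algebra)
  qed
  have Eb: "E \<le> 9/16*ln(A/P)" unfolding E_def by (rule E_bound[OF P B A])
  have cb: "c*B/(P+B) \<le> c"
  proof -
    have "B/(P+B) \<le> 1" using P B by simp
    then have "c*(B/(P+B)) \<le> c*1" by (rule mult_left_mono) (use c in simp)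
    then show ?thesis by simp
  qed
  have "al*Q1 + (1-al)*Q2 \<le> RHS" using comb Eb cb unfolding RHS_def by linarith
  moreover have "al*RHS + (1-al)*RHS < al*Q1 + (1-al)*Q2"
  proof -
    have "al*RHS < al*Q1" using h(1) al by simp
    moreover have "(1-al)*RHS \<le> (1-al)*Q2" using h(2) al by (intro mult_left_mono) auto
    ultimately show ?thesis by linarith
  qed
  ultimately show False by (simp add: algebra_simps)
qed




lemma alg2: "(A1::real) + A2 \<noteq> 0 \<Longrightarrow> P \<noteq> 0 \<Longrightarrow>
    (A2 * (l1 - A1/P) + A1 * (l2 + A2/P)) / (A1 + A2) = (A2 * l1 + A1 * l2) / (A1 + A2)"
  by (simp add: divide_simps; algebra)

lemma alg1: "(A::real) + P \<noteq> 0 \<Longrightarrow> (P*(l + u) + A*(l + (c + v)))/(A+P) = l + A*c/(A+P) + (P*u + A*v)/(A+P)"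
  by (simp add: divide_simps; algebra)

locale cfg =
  fixes x :: "nat \<Rightarrow> real" and q :: nat and D \<Delta> \<tau> :: real
  assumes q1: "1 \<le> q" and xq: "x q \<noteq> x 0"
    and upD: "\<And>j. 1 \<le> j \<Longrightarrow> j \<le> q \<Longrightarrow> \<bar>x 0 - x j\<bar> \<le> D"
    and loD: "\<And>j. 1 \<le> j \<Longrightarrow> j \<le> q - 1 \<Longrightarrow> \<Delta> \<le> \<bar>x 0 - x j\<bar>"
    and DD: "\<Delta> \<le> D" and Dpos: "0 < \<Delta>" and tpos: "0 < \<tau>" and tle: "\<tau> \<le> 1"
begin

definition p :: "nat \<Rightarrow> real" where "p j = x j - x 0"
definition c :: real where "c = ln (1/\<tau>)"
definition PV :: "nat \<Rightarrow> nat list \<Rightarrow> real" where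
  "PV i L = (\<Prod>j\<in>{i..<hd L}. \<bar>x (hd L) - x j\<bar>) * cvl \<tau> x L"
definition W :: "nat \<Rightarrow> real" where "W i = \<bar>p q\<bar> * (\<Prod>j\<in>{i..<q}. \<bar>p j\<bar>)"
definition good :: "nat \<Rightarrow> nat list \<Rightarrow> real \<Rightarrow> bool" where
  "good i L l \<longleftrightarrow> L \<noteq> [] \<and> sorted_wrt (<) L \<and> last L = q \<and> i \<le> hd L \<and>
     (1/\<tau>) * \<bar>p (hd L)\<bar> * PV i L \<le> exp l * W i"

lemma abs_p: "\<bar>p j\<bar> = \<bar>x 0 - x j\<bar>" unfolding p_def by simp
lemma xdiff: "\<bar>x a - x b\<bar> = \<bar>p a - p b\<bar>" unfolding p_def by simp

lemma p_range: "1 \<le> j \<Longrightarrow> j \<le> q - 1 \<Longrightarrow> \<Delta> \<le> \<bar>p j\<bar> \<and> \<bar>p j\<bar> \<le> D"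
  using loD upD q1 unfolding abs_p by auto
lemma pq: "0 < \<bar>p q\<bar>" "\<bar>p q\<bar> \<le> D"
  using xq upD[of q] q1 unfolding abs_p by auto
lemma p_nz: "1 \<le> j \<Longrightarrow> j \<le> q \<Longrightarrow> 0 < \<bar>p j\<bar>"
proof -
  assume j: "1 \<le> j" "j \<le> q"
  show ?thesis
  proof (cases "j = q")
    case True then show ?thesis using pq by simp
  next
    case False then show ?thesis using p_range[of j] j Dpos by force
  qed
qed

lemma c_nonneg: "0 \<le> c" unfolding c_def using tpos tle by simp
lemma exp_c: "exp c = 1/\<tau>" unfolding c_def using tpos by simp

lemma PV_nonneg: "0 \<le> PV i L" unfolding PV_def using cvl_nonneg[OF tpos] by (auto intro!: mult_nonneg_nonneg prod_nonneg)
lemma W_pos: "1 \<le> i \<Longrightarrow> 0 < W i" unfolding W_def using pq p_nz by (auto intro!: mult_pos_pos prod_pos)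

lemma good_hd_le: "good i L l \<Longrightarrow> hd L \<le> q"
  unfolding good_def using sorted_le_last[of L "hd L"] by auto

lemma good_init: "good q [q] c"
  unfolding good_def PV_def W_def using exp_c by simp

lemma good_absorb:
  assumes g: "good (Suc s) L l" and s: "1 \<le> s" "Suc s \<le> q"
    and f: "\<bar>p (hd L) - p s\<bar> \<le> exp d * \<bar>p s\<bar>"
  shows "good s L (l + d)"
proof -
  let ?e = "hd L"
  have gg: "L \<noteq> []" "sorted_wrt (<) L" "last L = q" "Suc s \<le> ?e"
    and gi: "(1/\<tau>) * \<bar>p ?e\<bar> * PV (Suc s) L \<le> exp l * W (Suc s)" using g unfolding good_def by auto
  have PVs: "PV s L = \<bar>p ?e - p s\<bar> * PV (Suc s) L"
    unfolding PV_def using gg(4) by (simp add: prod.atLeast_Suc_lessThan xdiff)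
  have Ws: "W s = \<bar>p s\<bar> * W (Suc s)"
    unfolding W_def using s by (simp add: prod.atLeast_Suc_lessThan)
  have "(1/\<tau>) * \<bar>p ?e\<bar> * PV s L = \<bar>p ?e - p s\<bar> * ((1/\<tau>) * \<bar>p ?e\<bar> * PV (Suc s) L)"
    unfolding PVs by (simp add: algebra_simps)
  also have "\<dots> \<le> \<bar>p ?e - p s\<bar> * (exp l * W (Suc s))" by (rule mult_left_mono[OF gi]) simp
  also have "\<dots> \<le> (exp d * \<bar>p s\<bar>) * (exp l * W (Suc s))"
    by (rule mult_right_mono[OF f]) (use W_pos[of "Suc s"] in auto)
  also have "\<dots> = exp (l + d) * W s" unfolding Ws by (simp add: exp_add algebra_simps)
  finally show ?thesis using gg unfolding good_def by auto
qed

lemma good_switch: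
  assumes g: "good (Suc s) L l" and s: "1 \<le> s" "Suc s \<le> q"
    and f: "(1/\<tau>) * \<bar>p (hd L) - p s\<bar> \<le> exp d * \<bar>p (hd L)\<bar>"
  shows "good s (s # L) (l + d)"
proof -
  let ?e = "hd L"
  have gg: "L \<noteq> []" "sorted_wrt (<) L" "last L = q" "Suc s \<le> ?e"
    and gi: "(1/\<tau>) * \<bar>p ?e\<bar> * PV (Suc s) L \<le> exp l * W (Suc s)" using g unfolding good_def by auto
  obtain rest where L: "L = ?e # rest" using gg(1) by (cases L) auto
  have sorted: "sorted_wrt (<) (s # L)"
    using gg(2,4) sorted_hd_le[OF gg(2)] by (auto intro: less_le_trans)
  have cv: "cvl \<tau> x (s # L) = (1/\<tau>) * \<bar>p ?e - p s\<bar> * PV (Suc s) L"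
  proof -
    have "cvl \<tau> x (s # L) = (1/\<tau>) * (\<Prod>j\<in>{s..<?e}. \<bar>x ?e - x j\<bar>) * cvl \<tau> x L"
      by (subst L, subst L, simp)
    also have "(\<Prod>j\<in>{s..<?e}. \<bar>x ?e - x j\<bar>) = \<bar>p ?e - p s\<bar> * (\<Prod>j\<in>{Suc s..<?e}. \<bar>x ?e - x j\<bar>)"
      using gg(4) by (simp add: prod.atLeast_Suc_lessThan xdiff)
    finally show ?thesis unfolding PV_def by (simp add: algebra_simps)
  qed
  have PVs: "PV s (s # L) = (1/\<tau>) * \<bar>p ?e - p s\<bar> * PV (Suc s) L"
    unfolding PV_def using cv by (simp add: PV_def)
  have Ws: "W s = \<bar>p s\<bar> * W (Suc s)"
    unfolding W_def using s by (simp add: prod.atLeast_Suc_lessThan)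
  have "(1/\<tau>) * \<bar>p s\<bar> * PV s (s # L) = \<bar>p s\<bar> * ((1/\<tau>) * \<bar>p ?e - p s\<bar>) * PV (Suc s) L * (1/\<tau>)"
    unfolding PVs by (simp add: algebra_simps)
  also have "\<dots> \<le> \<bar>p s\<bar> * (exp d * \<bar>p ?e\<bar>) * PV (Suc s) L * (1/\<tau>)"
    using f PV_nonneg tpos by (intro mult_right_mono mult_left_mono) auto
  also have "\<dots> = \<bar>p s\<bar> * exp d * ((1/\<tau>) * \<bar>p ?e\<bar> * PV (Suc s) L)" by (simp add: algebra_simps)
  also have "\<dots> \<le> \<bar>p s\<bar> * exp d * (exp l * W (Suc s))" by (rule mult_left_mono[OF gi]) simp
  also have "\<dots> = exp (l + d) * W s" unfolding Ws by (simp add: exp_add algebra_simps)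
  finally show ?thesis using gg sorted unfolding good_def by auto
qed

lemma good_final:
  assumes g: "good 1 L l" shows "I_tau \<tau> x q \<le> exp l"
proof -
  let ?e = "hd L"
  have gg: "L \<noteq> []" "sorted_wrt (<) L" "last L = q" "1 \<le> ?e"
    and gi: "(1/\<tau>) * \<bar>p ?e\<bar> * PV 1 L \<le> exp l * W 1" using g unfolding good_def by auto
  obtain rest where L: "L = ?e # rest" using gg(1) by (cases L) auto
  have adm: "admissible_chain q (0 # L)"
    unfolding admissible_chain_def using gg sorted_hd_le[OF gg(2)] by (auto intro: less_le_trans simp: Suc_le_eq)
  have cv: "cvl \<tau> x (0 # L) = (1/\<tau>) * \<bar>p ?e\<bar> * PV 1 L"
  proof -
    have "cvl \<tau> x (0 # L) = (1/\<tau>) * (\<Prod>j\<in>{0..<?e}. \<bar>x ?e - x j\<bar>) * cvl \<tau> x L"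
      by (subst L, subst L, simp)
    also have "(\<Prod>j\<in>{0..<?e}. \<bar>x ?e - x j\<bar>) = \<bar>p ?e\<bar> * (\<Prod>j\<in>{1..<?e}. \<bar>x ?e - x j\<bar>)"
      using gg(4) by (simp add: prod.atLeast_Suc_lessThan p_def)
    finally show ?thesis unfolding PV_def by (simp add: algebra_simps)
  qed
  have den: "(\<Prod>j\<in>{1..q}. \<bar>x 0 - x j\<bar>) = W 1"
  proof -
    have "{1..q} = {1..<Suc q}" by auto
    then have "(\<Prod>j\<in>{1..q}. \<bar>x 0 - x j\<bar>) = (\<Prod>j\<in>{1..<q}. \<bar>x 0 - x j\<bar>) * \<bar>x 0 - x q\<bar>"
      using q1 by (simp add: prod.atLeastLessThan_Suc)
    then show ?thesis unfolding W_def abs_p by simp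
  qed
  have "I_tau \<tau> x q \<le> chain_value \<tau> x q (0 # L)" by (rule I_tau_le[OF adm])
  also have "\<dots> = (1/\<tau>) * \<bar>p ?e\<bar> * PV 1 L / W 1" using chain_value_cvl[OF adm] cv den by simp
  also have "\<dots> \<le> exp l * W 1 / W 1" by (rule divide_right_mono[OF gi]) (use W_pos[of 1] in simp)
  also have "\<dots> = exp l" using W_pos[of 1] by simp
  finally show ?thesis .
qed

definition ok :: "real \<Rightarrow> real \<Rightarrow> bool" where
  "ok U A \<longleftrightarrow> 0 < A \<and> A \<le> U \<and> U \<le> D \<and> (A = U \<or> \<Delta> \<le> A)"
definition RHS2 :: "real \<Rightarrow> real \<Rightarrow> real \<Rightarrow> real \<Rightarrow> real" where
  "RHS2 U1 A1 U2 A2 = 2*c + ln 2 + (c/lambda_root + 9/16)*(ln (U1/A1) + ln (U2/A2))"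
definition Ph1 :: "nat \<Rightarrow> bool" where
  "Ph1 i \<longleftrightarrow> (\<exists>L l. good i L l \<and> ok \<bar>p q\<bar> \<bar>p (hd L)\<bar> \<and>
      l \<le> c * (1 + ln (\<bar>p q\<bar> / \<bar>p (hd L)\<bar>) / lambda_root))"
definition Ph2 :: "nat \<Rightarrow> bool" where
  "Ph2 i \<longleftrightarrow> (\<exists>L1 l1 U1 L2 l2 U2. good i L1 l1 \<and> good i L2 l2 \<and> p (hd L1) * p (hd L2) < 0 \<and>
      ok U1 \<bar>p (hd L1)\<bar> \<and> ok U2 \<bar>p (hd L2)\<bar> \<and>
      (\<bar>p (hd L2)\<bar> * l1 + \<bar>p (hd L1)\<bar> * l2) / (\<bar>p (hd L1)\<bar> + \<bar>p (hd L2)\<bar>)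
        \<le> RHS2 U1 \<bar>p (hd L1)\<bar> U2 \<bar>p (hd L2)\<bar>)"

lemma lam_pos: "0 < lambda_root" using lambda_root_props by simp
lemma ln_bb: "ln bb = lambda_root" unfolding bb_def by simp

lemma big_ratio:
  assumes "bb * P < A" "0 < P" shows "lambda_root \<le> ln (A/P)" "c \<le> c/lambda_root * ln (A/P)"
proof -
  have "bb < A/P" using assms by (simp add: field_simps)
  then have "ln bb \<le> ln (A/P)" using bb_props(1) by (subst ln_le_cancel_iff) auto
  then show l: "lambda_root \<le> ln (A/P)" using ln_bb by simp
  have "c * 1 \<le> c * (ln (A/P) / lambda_root)"
    using l lam_pos c_nonneg by (intro mult_left_mono) (auto simp: field_simps)
  then show "c \<le> c/lambda_root * ln (A/P)" by simp
qed

lemma hd_range: "good (Suc s) L l \<Longrightarrow> 1 \<le> hd L \<and> hd L \<le> q"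
  using good_hd_le[of "Suc s" L l] unfolding good_def by auto

lemma ph1_step:
  assumes ph: "Ph1 (Suc s)" and s: "1 \<le> s" "Suc s \<le> q"
  shows "Ph1 s \<or> Ph2 s"
proof -
  obtain L l where g: "good (Suc s) L l" and okA: "ok \<bar>p q\<bar> \<bar>p (hd L)\<bar>"
    and lb: "l \<le> c * (1 + ln (\<bar>p q\<bar> / \<bar>p (hd L)\<bar>) / lambda_root)"
    using ph unfolding Ph1_def by auto
  define e where "e = hd L"
  define A where "A = \<bar>p e\<bar>"
  define P where "P = \<bar>p s\<bar>"
  have hP: "\<Delta> \<le> P" "P \<le> D" using p_range[of s] s unfolding P_def by auto
  have Ppos: "0 < P" using hP Dpos by simp
  have he: "1 \<le> e" "e \<le> q" using hd_range[OF g] unfolding e_def by auto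
  have Apos: "0 < A" unfolding A_def using p_nz[OF he] .
  have okA': "ok \<bar>p q\<bar> A" using okA unfolding A_def e_def .
  have lb': "l \<le> c * (1 + ln (\<bar>p q\<bar> / A) / lambda_root)" using lb unfolding A_def e_def .
  have lnA: "0 \<le> ln (\<bar>p q\<bar> / A)" using okA' unfolding ok_def by simp
  have nz: "p e * p s \<noteq> 0" using Apos Ppos unfolding A_def P_def by auto
  show ?thesis
  proof (cases "0 < p e * p s")
    case True
    then have dist: "\<bar>p e - p s\<bar> = \<bar>A - P\<bar>" unfolding A_def P_def by (rule same_sign_dist)
    show ?thesis
    proof (cases "A \<le> bb * P")
      case True
      have "\<bar>1 - A/P\<bar> \<le> exp (- (A/P))" by (rule absorb_ineq) (use True Apos Ppos in \<open>auto simp: field_simps\<close>)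
      also have "\<dots> \<le> 1" using Apos Ppos by simp
      finally have "\<bar>1 - A/P\<bar> \<le> 1" .
      then have "\<bar>A - P\<bar> \<le> P" using Ppos by (simp add: abs_le_iff field_simps)
      then have "\<bar>p (hd L) - p s\<bar> \<le> exp 0 * \<bar>p s\<bar>" using dist unfolding e_def P_def by simp
      then have "good s L (l + 0)" by (rule good_absorb[OF g s])
      then have "Ph1 s" unfolding Ph1_def using okA lb by auto
      then show ?thesis ..
    next
      case False
      then have big: "bb * P < A" by simp
      have PA: "P < A" using big bb_props(1) Ppos by (smt (verit) mult_less_cancel_right1)
      have "(1/\<tau>) * \<bar>p (hd L) - p s\<bar> \<le> exp c * \<bar>p (hd L)\<bar>"
        using dist PA Ppos tpos unfolding exp_c e_def[symmetric] A_def[symmetric] by (simp add: divide_right_mono)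
      then have g': "good s (s # L) (l + c)" by (rule good_switch[OF g s])
      have okP: "ok \<bar>p q\<bar> \<bar>p (hd (s # L))\<bar>"
        using okA' PA hP Ppos unfolding ok_def P_def by auto
      have "ln (\<bar>p q\<bar> / P) = ln (\<bar>p q\<bar> / A) + ln (A / P)"
        using okA' Ppos Apos pq(1) unfolding ok_def by (simp add: ln_div)
      then have "c * (1 + ln (\<bar>p q\<bar> / P) / lambda_root) = c * (1 + ln (\<bar>p q\<bar> / A) / lambda_root) + c/lambda_root * ln (A/P)"
        by (simp add: algebra_simps add_divide_distrib)
      moreover have "c \<le> c/lambda_root * ln (A/P)" by (rule big_ratio(2)[OF big Ppos])
      ultimately have "l + c \<le> c * (1 + ln (\<bar>p q\<bar> / \<bar>p (hd (s # L))\<bar>) / lambda_root)"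
        using lb' unfolding P_def by simp
      then have "Ph1 s" unfolding Ph1_def using g' okP by blast
      then show ?thesis ..
    qed
  next
    case False
    then have neg: "p e * p s < 0" using nz by linarith
    then have dist: "\<bar>p e - p s\<bar> = A + P" unfolding A_def P_def by (rule opp_sign_dist)
    have g1: "good s L (l + ln ((A+P)/P))"
    proof (rule good_absorb[OF g s])
      show "\<bar>p (hd L) - p s\<bar> \<le> exp (ln ((A+P)/P)) * \<bar>p s\<bar>"
        using dist Apos Ppos unfolding e_def[symmetric] P_def[symmetric] by simp
    qed
    have g2: "good s (s # L) (l + (c + ln ((A+P)/A)))"
    proof (rule good_switch[OF g s])
      show "(1/\<tau>) * \<bar>p (hd L) - p s\<bar> \<le> exp (c + ln ((A+P)/A)) * \<bar>p (hd L)\<bar>"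
        using dist Apos Ppos unfolding e_def[symmetric] A_def[symmetric] by (simp add: exp_add exp_c)
    qed
    have okP: "ok D P" unfolding ok_def using hP Ppos by auto
    have ent: "P * ln ((A+P)/P) + A * ln ((A+P)/A) \<le> (A+P) * ln 2"
      using entropy_ln2[OF Apos Ppos] by (simp add: add.commute)
    have "(P * (l + ln ((A+P)/P)) + A * (l + (c + ln ((A+P)/A)))) / (A + P)
        = l + A*c/(A+P) + (P * ln ((A+P)/P) + A * ln ((A+P)/A)) / (A+P)"
      by (rule alg1) (use Apos Ppos in simp)
    also have "\<dots> \<le> l + c + ln 2"
    proof -
      have "A*c/(A+P) \<le> c" using Apos Ppos c_nonneg by (simp add: field_simps mult_left_mono)
      moreover have "(P * ln ((A+P)/P) + A * ln ((A+P)/A)) / (A+P) \<le> ln 2"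
        using ent Apos Ppos by (simp add: divide_le_eq mult.commute)
      ultimately show ?thesis by linarith
    qed
    also have "\<dots> \<le> RHS2 \<bar>p q\<bar> A D P"
    proof -
      have lnD: "0 \<le> ln (D/P)" using hP Ppos by simp
      have "c/lambda_root * ln (\<bar>p q\<bar> / A) \<le> (c/lambda_root + 9/16) * (ln (\<bar>p q\<bar> / A) + ln (D/P))"
        using lnD lnA c_nonneg lam_pos by (intro mult_mono) auto
      moreover have "l \<le> c + c/lambda_root * ln (\<bar>p q\<bar> / A)" using lb' by (simp add: algebra_simps)
      ultimately show ?thesis unfolding RHS2_def by linarith
    qed
    finally have psi: "(P * (l + ln ((A+P)/P)) + A * (l + (c + ln ((A+P)/A)))) / (A + P) \<le> RHS2 \<bar>p q\<bar> A D P" .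
    have "Ph2 s" unfolding Ph2_def
      apply (rule exI[of _ L], rule exI[of _ "l + ln ((A+P)/P)"], rule exI[of _ "\<bar>p q\<bar>"])
      apply (rule exI[of _ "s # L"], rule exI[of _ "l + (c + ln ((A+P)/A))"], rule exI[of _ D])
      using g1 g2 neg okA' okP psi unfolding A_def P_def e_def by (simp add: mult.commute)
    then show ?thesis ..
  qed
qed

lemma ph2_own:
  assumes g1: "good (Suc s) L1 l1" and g2: "good (Suc s) L2 l2"
    and sg: "p (hd L1) * p (hd L2) < 0"
    and ok1: "ok U1 \<bar>p (hd L1)\<bar>" and ok2: "ok U2 \<bar>p (hd L2)\<bar>"
    and psi: "(\<bar>p (hd L2)\<bar> * l1 + \<bar>p (hd L1)\<bar> * l2) / (\<bar>p (hd L1)\<bar> + \<bar>p (hd L2)\<bar>)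
        \<le> RHS2 U1 \<bar>p (hd L1)\<bar> U2 \<bar>p (hd L2)\<bar>"
    and s: "1 \<le> s" "Suc s \<le> q" and own: "0 < p (hd L1) * p s"
  shows "Ph2 s"
proof -
  define e1 where "e1 = hd L1"
  define e2 where "e2 = hd L2"
  define A1 where "A1 = \<bar>p e1\<bar>"
  define A2 where "A2 = \<bar>p e2\<bar>"
  define P where "P = \<bar>p s\<bar>"
  have hP: "\<Delta> \<le> P" "P \<le> D" using p_range[of s] s unfolding P_def by auto
  have Ppos: "0 < P" using hP Dpos by simp
  have A1pos: "0 < A1" unfolding A1_def e1_def using p_nz hd_range[OF g1] by auto
  have A2pos: "0 < A2" unfolding A2_def e2_def using p_nz hd_range[OF g2] by auto
  have d1: "\<bar>p e1 - p s\<bar> = \<bar>A1 - P\<bar>" unfolding A1_def P_def e1_def by (rule same_sign_dist[OF own])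
  have sg2: "p e2 * p s < 0"
  proof -
    have "(p e1 * p e2) * (p e1 * p s) < 0" using sg own unfolding e1_def e2_def by (simp add: mult_neg_pos)
    then have "(p e2 * p s) * (p e1 * p e1) < 0" by (simp add: algebra_simps)
    then show ?thesis by (simp add: mult_less_0_iff)
  qed
  have d2: "\<bar>p e2 - p s\<bar> = A2 + P" unfolding A2_def P_def by (rule opp_sign_dist[OF sg2])
  have ok1': "ok U1 A1" and ok2': "ok U2 A2" using ok1 ok2 unfolding A1_def A2_def e1_def e2_def .
  have psi': "(A2 * l1 + A1 * l2) / (A1 + A2) \<le> RHS2 U1 A1 U2 A2"
    using psi unfolding A1_def A2_def e1_def e2_def .
  show ?thesis
  proof (cases "A1 \<le> bb * P")
    case True
    have t1: "good s L1 (l1 + - (A1/P))"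
    proof (rule good_absorb[OF g1 s])
      have "\<bar>1 - A1/P\<bar> \<le> exp (- (A1/P))" by (rule absorb_ineq) (use True A1pos Ppos in \<open>auto simp: field_simps\<close>)
      then have "P * \<bar>1 - A1/P\<bar> \<le> P * exp (- (A1/P))" using Ppos by simp
      moreover have "P * \<bar>1 - A1/P\<bar> = \<bar>A1 - P\<bar>" using Ppos by (simp add: abs_mult[symmetric] field_simps abs_minus_commute)
      ultimately show "\<bar>p (hd L1) - p s\<bar> \<le> exp (- (A1/P)) * \<bar>p s\<bar>"
        using d1 unfolding e1_def P_def by (simp add: mult.commute)
    qed
    have t2: "good s L2 (l2 + A2/P)"
    proof (rule good_absorb[OF g2 s])
      have "1 + A2/P \<le> exp (A2/P)" by (rule exp_ge_add_one_self)
      then have "P * (1 + A2/P) \<le> P * exp (A2/P)" using Ppos by simp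
      then show "\<bar>p (hd L2) - p s\<bar> \<le> exp (A2/P) * \<bar>p s\<bar>"
        using d2 Ppos unfolding e2_def P_def by (simp add: algebra_simps)
    qed
    have eqn: "(A2 * (l1 + - (A1/P)) + A1 * (l2 + A2/P)) / (A1 + A2) = (A2 * l1 + A1 * l2) / (A1 + A2)"
      using alg2[of A1 A2 P l1 l2] A1pos A2pos Ppos by simp
    have "(A2 * (l1 + - (A1/P)) + A1 * (l2 + A2/P)) / (A1 + A2) \<le> RHS2 U1 A1 U2 A2"
      by (subst eqn) (rule psi')
    then show ?thesis unfolding Ph2_def
      using t1 t2 sg ok1 ok2 unfolding A1_def A2_def e1_def e2_def by blast
  next
    case False
    then have big: "bb * P < A1" by simp
    have PA: "P < A1" using big bb_props(1) Ppos by (smt (verit) mult_less_cancel_right1)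
    have A65: "6/5 * P \<le> A1" using big bb_gt Ppos by (smt (verit) mult_right_mono)
    have t2: "good s L2 (l2 + ln ((A2+P)/P))"
    proof (rule good_absorb[OF g2 s])
      show "\<bar>p (hd L2) - p s\<bar> \<le> exp (ln ((A2+P)/P)) * \<bar>p s\<bar>"
        using d2 A2pos Ppos unfolding e2_def[symmetric] P_def[symmetric] by simp
    qed
    have okP: "ok U1 P" using ok1' PA hP Ppos unfolding ok_def by auto
    have rhs: "RHS2 U1 A1 U2 A2 + c + 9/16 * ln (A1/P) \<le> RHS2 U1 P U2 A2"
    proof -
      have "ln (U1/P) = ln (U1/A1) + ln (A1/P)" using ok1' Ppos A1pos unfolding ok_def by (simp add: ln_div)
      then have "RHS2 U1 P U2 A2 = RHS2 U1 A1 U2 A2 + (c/lambda_root + 9/16) * ln (A1/P)"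
        unfolding RHS2_def by (simp add: algebra_simps)
      moreover have "c \<le> c/lambda_root * ln (A1/P)" by (rule big_ratio(2)[OF big Ppos])
      ultimately show ?thesis by (simp add: algebra_simps)
    qed
    have fs: "(A2*(l1 + c + ln((A1-P)/A1)) + P*(l2 + ln((A2+P)/P)))/(P+A2) \<le> (A2*l1 + A1*l2)/(A1+A2) + c + 9/16*ln(A1/P)
       \<or> (A2*(l2 + c + ln((A2+P)/A2)) + P*(l2 + ln((A2+P)/P)))/(P+A2) \<le> (A2*l1 + A1*l2)/(A1+A2) + c + 9/16*ln(A1/P)"
      by (rule forced_switch[OF Ppos A2pos A65 c_nonneg])
    then show ?thesis
    proof
      assume o1: "(A2*(l1 + c + ln((A1-P)/A1)) + P*(l2 + ln((A2+P)/P)))/(P+A2) \<le> (A2*l1 + A1*l2)/(A1+A2) + c + 9/16*ln(A1/P)"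
      have t1: "good s (s # L1) (l1 + (c + ln((A1-P)/A1)))"
      proof (rule good_switch[OF g1 s])
        show "(1/\<tau>) * \<bar>p (hd L1) - p s\<bar> \<le> exp (c + ln((A1-P)/A1)) * \<bar>p (hd L1)\<bar>"
          using d1 PA Ppos unfolding e1_def[symmetric] A1_def[symmetric] by (simp add: exp_add exp_c)
      qed
      have "(A2*(l1 + (c + ln((A1-P)/A1))) + P*(l2 + ln((A2+P)/P)))/(P+A2) \<le> RHS2 U1 P U2 A2"
        using o1 psi' rhs by (simp add: add.assoc)
      then show ?thesis unfolding Ph2_def
        apply (rule_tac x="s # L1" in exI, rule_tac x="l1 + (c + ln((A1-P)/A1))" in exI, rule_tac x=U1 in exI)
        apply (rule_tac x=L2 in exI, rule_tac x="l2 + ln ((A2+P)/P)" in exI, rule_tac x=U2 in exI)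
        using t1 t2 sg2 okP ok2' unfolding P_def A2_def e2_def by (simp add: mult.commute add.commute)
    next
      assume o2: "(A2*(l2 + c + ln((A2+P)/A2)) + P*(l2 + ln((A2+P)/P)))/(P+A2) \<le> (A2*l1 + A1*l2)/(A1+A2) + c + 9/16*ln(A1/P)"
      have t1: "good s (s # L2) (l2 + (c + ln((A2+P)/A2)))"
      proof (rule good_switch[OF g2 s])
        show "(1/\<tau>) * \<bar>p (hd L2) - p s\<bar> \<le> exp (c + ln((A2+P)/A2)) * \<bar>p (hd L2)\<bar>"
          using d2 A2pos Ppos unfolding e2_def[symmetric] A2_def[symmetric] by (simp add: exp_add exp_c)
      qed
      have "(A2*(l2 + (c + ln((A2+P)/A2))) + P*(l2 + ln((A2+P)/P)))/(P+A2) \<le> RHS2 U1 P U2 A2"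
        using o2 psi' rhs by (simp add: add.assoc)
      then show ?thesis unfolding Ph2_def
        apply (rule_tac x="s # L2" in exI, rule_tac x="l2 + (c + ln((A2+P)/A2))" in exI, rule_tac x=U1 in exI)
        apply (rule_tac x=L2 in exI, rule_tac x="l2 + ln ((A2+P)/P)" in exI, rule_tac x=U2 in exI)
        using t1 t2 sg2 okP ok2' unfolding P_def A2_def e2_def by (simp add: mult.commute add.commute)
    qed
  qed
qed

lemma ph2_step:
  assumes ph: "Ph2 (Suc s)" and s: "1 \<le> s" "Suc s \<le> q"
  shows "Ph2 s"
proof -
  obtain L1 l1 U1 L2 l2 U2 where g1: "good (Suc s) L1 l1" and g2: "good (Suc s) L2 l2"
    and sg: "p (hd L1) * p (hd L2) < 0" and ok1: "ok U1 \<bar>p (hd L1)\<bar>" and ok2: "ok U2 \<bar>p (hd L2)\<bar>"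
    and psi: "(\<bar>p (hd L2)\<bar> * l1 + \<bar>p (hd L1)\<bar> * l2) / (\<bar>p (hd L1)\<bar> + \<bar>p (hd L2)\<bar>)
        \<le> RHS2 U1 \<bar>p (hd L1)\<bar> U2 \<bar>p (hd L2)\<bar>"
    using ph unfolding Ph2_def by blast
  have ps: "p s \<noteq> 0" using p_nz[of s] s by auto
  show ?thesis
  proof (cases "0 < p (hd L1) * p s")
    case True
    show ?thesis by (rule ph2_own[OF g1 g2 sg ok1 ok2 psi s True])
  next
    case False
    have "0 < p (hd L2) * p s"
    proof -
      have "p (hd L1) * p s \<noteq> 0" using sg ps by auto
      then have "p (hd L1) * p s < 0" using False by linarith
      then have "(p (hd L1) * p (hd L2)) * (p (hd L1) * p s) > 0" using sg by (simp add: mult_neg_neg)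
      then have "(p (hd L2) * p s) * (p (hd L1) * p (hd L1)) > 0" by (simp add: algebra_simps)
      then show ?thesis by (simp add: zero_less_mult_iff)
    qed
    moreover have "p (hd L2) * p (hd L1) < 0" using sg by (simp add: mult.commute)
    moreover have "(\<bar>p (hd L1)\<bar> * l2 + \<bar>p (hd L2)\<bar> * l1) / (\<bar>p (hd L2)\<bar> + \<bar>p (hd L1)\<bar>)
        \<le> RHS2 U2 \<bar>p (hd L2)\<bar> U1 \<bar>p (hd L1)\<bar>"
      using psi unfolding RHS2_def by (simp add: add.commute)
    ultimately show ?thesis using ph2_own[OF g2 g1 _ ok2 ok1 _ s] by blast
  qed
qed

lemma inv_down: "k < q \<Longrightarrow> Ph1 (q - k) \<or> Ph2 (q - k)"
proof (induction k)
  case 0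
  have "good q [q] c" by (rule good_init)
  moreover have "ok \<bar>p q\<bar> \<bar>p (hd [q])\<bar>" unfolding ok_def using pq by simp
  moreover have "c \<le> c * (1 + ln (\<bar>p q\<bar> / \<bar>p (hd [q])\<bar>) / lambda_root)" using pq by simp
  ultimately have "Ph1 q" unfolding Ph1_def by blast
  then show ?case by simp
next
  case (Suc k)
  then have ih: "Ph1 (Suc (q - Suc k)) \<or> Ph2 (Suc (q - Suc k))" using Suc_diff_Suc by fastforce
  have s: "1 \<le> q - Suc k" "Suc (q - Suc k) \<le> q" using Suc.prems by auto
  from ih show ?case using ph1_step[OF _ s] ph2_step[OF _ s] by blast
qed

lemma ok_ln: assumes "ok U A" shows "0 \<le> ln (U/A)" "ln (U/A) \<le> ln (D/\<Delta>)"
proof -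
  have a: "0 < A" "A \<le> U" "U \<le> D" "A = U \<or> \<Delta> \<le> A" using assms unfolding ok_def by auto
  show "0 \<le> ln (U/A)" using a by simp
  show "ln (U/A) \<le> ln (D/\<Delta>)"
  proof (cases "A = U")
    case True then show ?thesis using DD Dpos a by simp
  next
    case False
    then have "\<Delta> \<le> A" using a by simp
    then have "U/A \<le> D/\<Delta>" using a Dpos by (simp add: frac_le)
    moreover have "0 < U/A" using a by simp
    ultimately show ?thesis by (subst ln_le_cancel_iff) auto
  qed
qed

lemma final_bound: "I_tau \<tau> x q \<le> 2 / \<tau>\<^sup>2 * (D / \<Delta>) powr (9/8 + 2 / lambda_root * ln (1 / \<tau>))"
proof -
  define T where "T = 2*c + ln 2 + (c/lambda_root + 9/16)*(2 * ln (D/\<Delta>))"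
  have lnR: "0 \<le> ln (D/\<Delta>)" using DD Dpos by simp
  have cl: "0 \<le> c/lambda_root" using c_nonneg lam_pos by simp
  have "\<exists>L l. good 1 L l \<and> l \<le> T"
  proof -
    have "Ph1 1 \<or> Ph2 1" using inv_down[of "q - 1"] q1 by simp
    then show ?thesis
    proof
      assume "Ph1 1"
      then obtain L l where g: "good 1 L l" and okA: "ok \<bar>p q\<bar> \<bar>p (hd L)\<bar>"
        and lb: "l \<le> c * (1 + ln (\<bar>p q\<bar> / \<bar>p (hd L)\<bar>) / lambda_root)" unfolding Ph1_def by blast
      have "c * (1 + ln (\<bar>p q\<bar> / \<bar>p (hd L)\<bar>) / lambda_root) = c + c/lambda_root * ln (\<bar>p q\<bar> / \<bar>p (hd L)\<bar>)"
        by (simp add: algebra_simps)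
      also have "\<dots> \<le> c + c/lambda_root * ln (D/\<Delta>)"
        by (rule add_left_mono, rule mult_left_mono) (use ok_ln[OF okA] cl in auto)
      also have "\<dots> \<le> T"
      proof -
        have "0 \<le> ln (2::real)" by simp
        moreover have "c/lambda_root * ln (D/\<Delta>) \<le> (c/lambda_root + 9/16) * (2 * ln (D/\<Delta>))"
        proof -
          have "0 \<le> c/lambda_root * ln (D/\<Delta>)" using cl lnR by (rule mult_nonneg_nonneg)
          moreover have "(c/lambda_root + 9/16) * (2 * ln (D/\<Delta>)) = 2 * (c/lambda_root * ln (D/\<Delta>)) + 9/8 * ln (D/\<Delta>)"
            by (simp add: algebra_simps)
          ultimately show ?thesis using lnR by linarith
        qed
        ultimately show ?thesis unfolding T_def using c_nonneg by linarith
      qed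
      finally have "l \<le> T" using lb by linarith
      then show ?thesis using g by blast
    next
      assume "Ph2 1"
      then obtain L1 l1 U1 L2 l2 U2 where g1: "good 1 L1 l1" and g2: "good 1 L2 l2"
        and ok1: "ok U1 \<bar>p (hd L1)\<bar>" and ok2: "ok U2 \<bar>p (hd L2)\<bar>"
        and psi: "(\<bar>p (hd L2)\<bar> * l1 + \<bar>p (hd L1)\<bar> * l2) / (\<bar>p (hd L1)\<bar> + \<bar>p (hd L2)\<bar>)
          \<le> RHS2 U1 \<bar>p (hd L1)\<bar> U2 \<bar>p (hd L2)\<bar>" unfolding Ph2_def by blast
      define A1 where "A1 = \<bar>p (hd L1)\<bar>"
      define A2 where "A2 = \<bar>p (hd L2)\<bar>"
      have Ap: "0 < A1" "0 < A2" using ok1 ok2 unfolding ok_def A1_def A2_def by auto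
      have "RHS2 U1 A1 U2 A2 \<le> T" unfolding RHS2_def T_def
        using ok_ln[OF ok1] ok_ln[OF ok2] cl unfolding A1_def[symmetric] A2_def[symmetric]
        by (intro add_left_mono mult_left_mono) auto
      moreover have "min l1 l2 \<le> (A2 * l1 + A1 * l2) / (A1 + A2)"
      proof -
        have "(A1 + A2) * min l1 l2 \<le> A2 * l1 + A1 * l2"
          using Ap by (simp add: algebra_simps) (smt (verit) min.cobounded1 min.cobounded2 mult_left_mono)
        then show ?thesis using Ap by (simp add: field_simps)
      qed
      ultimately have "min l1 l2 \<le> T" using psi unfolding A1_def A2_def by linarith
      then show ?thesis using g1 g2 by (cases "l1 \<le> l2") (auto simp: min_def)
    qed
  qed
  then obtain L l where g: "good 1 L l" and lT: "l \<le> T" by blast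
  have "I_tau \<tau> x q \<le> exp l" by (rule good_final[OF g])
  also have "\<dots> \<le> exp T" using lT by simp
  also have "exp T = 2 / \<tau>\<^sup>2 * (D / \<Delta>) powr (9/8 + 2 / lambda_root * ln (1 / \<tau>))"
  proof -
    have R: "0 < D/\<Delta>" using DD Dpos by simp
    have Te: "T = c + c + ln 2 + (9/8 + 2 / lambda_root * ln (1 / \<tau>)) * ln (D/\<Delta>)"
      unfolding T_def c_def by (simp add: algebra_simps)
    have "exp T = exp c * exp c * 2 * exp ((9/8 + 2 / lambda_root * ln (1 / \<tau>)) * ln (D/\<Delta>))"
      unfolding Te exp_add by simp
    also have "\<dots> = 2 / \<tau>\<^sup>2 * (D / \<Delta>) powr (9/8 + 2 / lambda_root * ln (1 / \<tau>))"
      using R tpos DD Dpos unfolding exp_c by (simp add: powr_def power2_eq_square)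
    finally show ?thesis .
  qed
  finally show ?thesis .
qed

end


theorem lemma2:
  fixes x :: "nat \<Rightarrow> real" and q :: nat and D \<Delta> \<tau> :: real
  assumes "q \<ge> 1"
    and "x q \<noteq> x 0"
    and "\<And>j. 1 \<le> j \<Longrightarrow> j \<le> q \<Longrightarrow> \<bar>x 0 - x j\<bar> \<le> D"
    and "\<And>j. 1 \<le> j \<Longrightarrow> j \<le> q - 1 \<Longrightarrow> \<bar>x 0 - x j\<bar> \<ge> \<Delta>"
    and "D \<ge> \<Delta>" and "\<Delta> > 0"
    and "0 < \<tau>" and "\<tau> \<le> 1"
  shows "I_tau \<tau> x q \<le> 2 / \<tau>\<^sup>2 * (D / \<Delta>) powr (9/8 + 2 / lambda_root * ln (1 / \<tau>))"
proof -
  interpret cfg x q D \<Delta> \<tau> by unfold_locales (use assms in auto)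
  show ?thesis by (rule final_bound)
qed

end
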